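(* Let $X$ be a multitype Galton–Watson tree with offspring kernel $\mathbb Q$ on a finite alphabet $\mathcal X$. Assume that $(\tilde L_X,M_X)$, conditioned on $\{|T|=n\}$, satisfies a large deviation principle (as $n\to\infty$, speed $n$) in $\mathcal M_s$ with the convex, good rate function $$\widetilde J(\varpi,\nu)=\begin{cases}H(\nu\,\|\,\nu_1\otimes\mathbb Q)&\text{if }\varpi_2=\nu_1,\\ \infty&\text{otherwise.}\end{cases}$$ Then $(\tilde L_X,M_X)$ conditioned on $\{|T|=n\}$ satisfies the large deviation principle in $\tilde{\mathcal M}(\mathcal X\times\mathcal X)\times\mathcal M(\mathcal X\times\mathcal X^* )$ with the convex, good rate function $J(\varpi,\nu)=H(\nu\,\|\,\nu_1\otimes\mathbb Q)$ if $(\varpi,\nu)$ is sub-consistent and $\varpi_2=\nu_1$, and $J(\varpi,\nu)=\infty$ otherwise.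
   Context: $\mathcal X^*=\bigcup_{n\ge0}\{n\}\times\mathcal X^n$, elements $c=(n,a_1,\dots,a_n)$, $m(a,c)=\sum_{i}\mathbf 1\{a_i=a\}$. The multitype Galton–Watson tree: root type from an initial law $\mu$; each vertex $v$ of type $a$ independently has children number and types $C(v)=(N(v),X_1(v),\dots,X_{N(v)}(v))\sim\mathbb Q\{\cdot\mid a\}$. $M_X(a,c)=\frac1{|T|}\sum_v\delta_{(X(v),C(v))}(a,c)$; $\tilde L_X(a,b)=\frac1{|T|}\sum_{e\in E}\delta_{(X(e_1),X(e_2))}(a,b)$ (edges oriented away from the root, $e_1$ parent, $e_2$ child). $\tilde{\mathcal M}(\mathcal X\times\mathcal X)$: finite measures; $\mathcal M(\mathcal X\times\mathcal X^* )$: probability measures $\nu$ with $\int n\,d\nu<\infty$; weak topology. $(\varpi,\nu)$ is sub-consistent if $\varpi(a,b)\ge\sum_c m(b,c)\nu(a,c)$ for all $a,b$; $\mathcal M_s$ is the set of sub-consistent pairs, with the subspace topology. $\nu_1$: $\mathcal X$-marginal of $\nu$; $\varpi_2$: second marginal of $\varpi$; $\nu_1\otimes\mathbb Q(a,c)=\nu_1(a)\mathbb Q\{c\mid a\}$; $H$ relative entropy. *)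

theory Defs
  imports "HOL-Analysis.Analysis" "HOL-Library.Extended_Real" "HOL-Library.Extended_Nonnegative_Real"
begin

text \<open>An element c = (n,a_1,...,a_n) of X* is represented by the list [a_1,...,a_n].
A (finite) typed plane tree: a vertex of type a with an ordered list of subtrees.\<close>

datatype 'a ttree = TNode 'a "'a ttree list"

primrec troot :: "'a ttree \<Rightarrow> 'a" where
  "troot (TNode a ts) = a"

primrec tsize :: "'a ttree \<Rightarrow> nat" where
  "tsize (TNode a ts) = 1 + sum_list (map tsize ts)"

primrec vert_count :: "'a ttree \<Rightarrow> 'a \<times> 'a list \<Rightarrow> nat" where
  "vert_count (TNode a ts) p =
     (if p = (a, map troot ts) then 1 else 0) + sum_list (map (\<lambda>s. vert_count s p) ts)"

primrec edge_count :: "'a ttree \<Rightarrow> 'a \<times> 'a \<Rightarrow> nat" where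
  "edge_count (TNode a ts) p =
     (if fst p = a then count_list (map troot ts) (snd p) else 0)
     + sum_list (map (\<lambda>s. edge_count s p) ts)"

text \<open>Probability that the GW tree equals a given finite typed plane tree:
 mu(root type) times the product over vertices of Q{C(v) | X(v)}.\<close>
primrec kprob :: "('a \<Rightarrow> 'a list \<Rightarrow> real) \<Rightarrow> 'a ttree \<Rightarrow> real" where
  "kprob Q (TNode a ts) = Q a (map troot ts) * prod_list (map (kprob Q) ts)"

definition gw_prob :: "('a \<Rightarrow> real) \<Rightarrow> ('a \<Rightarrow> 'a list \<Rightarrow> real) \<Rightarrow> 'a ttree \<Rightarrow> real" where
  "gw_prob \<mu> Q t = \<mu> (troot t) * kprob Q t"

definition emp_pair :: "'a ttree \<Rightarrow> (('a \<times> 'a \<Rightarrow> real) \<times> ('a \<times> 'a list \<Rightarrow> real))" where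
  "emp_pair t = ((\<lambda>p. real (edge_count t p) / real (tsize t)),
                 (\<lambda>p. real (vert_count t p) / real (tsize t)))"

definition cond_prob :: "('a::finite \<Rightarrow> real) \<Rightarrow> ('a \<Rightarrow> 'a list \<Rightarrow> real) \<Rightarrow> nat
     \<Rightarrow> (('a \<times> 'a \<Rightarrow> real) \<times> ('a \<times> 'a list \<Rightarrow> real)) set \<Rightarrow> real" where
  "cond_prob \<mu> Q n A =
     (\<Sum>t\<in>{t. tsize t = n \<and> emp_pair t \<in> A}. gw_prob \<mu> Q t) / (\<Sum>t\<in>{t. tsize t = n}. gw_prob \<mu> Q t)"

text \<open>Measures on a countable discrete space are given by their mass functions.\<close>

definition fin_meas :: "('b \<Rightarrow> real) set" where
  "fin_meas = {m. (\<forall>x. 0 \<le> m x) \<and> m summable_on UNIV}"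

definition prob_meas :: "('b \<Rightarrow> real) set" where
  "prob_meas = {m. m \<in> fin_meas \<and> (\<Sum>\<^sub>\<infinity>x. m x) = 1}"

text \<open>M(X x X*): probability measures with finite mean number of children.\<close>
definition prob_meas_fm :: "('a \<times> 'a list \<Rightarrow> real) set" where
  "prob_meas_fm = {\<nu>. \<nu> \<in> prob_meas \<and> (\<lambda>p. real (length (snd p)) * \<nu> p) summable_on UNIV}"

text \<open>Weak topology on a set S of finite measures on a discrete countable space:
 the coarsest topology making m |-> integral of f dm continuous for every bounded
 (= bounded continuous, the space being discrete) test function f.\<close>
definition weak_top :: "('b \<Rightarrow> real) set \<Rightarrow> ('b \<Rightarrow> real) topology" where
  "weak_top S = topology_generated_by
     {{m \<in> S. (\<Sum>\<^sub>\<infinity>x. f x * m x) \<in> U} | f U. bounded (range f) \<and> open U}"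

definition space_top :: "(('a \<times> 'a \<Rightarrow> real) \<times> ('a \<times> 'a list \<Rightarrow> real)) topology" where
  "space_top = prod_topology (weak_top fin_meas) (weak_top prob_meas_fm)"

definition sub_consistent :: "('a \<times> 'a \<Rightarrow> real) \<Rightarrow> ('a \<times> 'a list \<Rightarrow> real) \<Rightarrow> bool" where
  "sub_consistent \<omega> \<nu> \<longleftrightarrow>
     (\<forall>a b. \<omega> (a, b) \<ge> (\<Sum>\<^sub>\<infinity>c. real (count_list c b) * \<nu> (a, c)))"

definition M_s :: "(('a \<times> 'a \<Rightarrow> real) \<times> ('a \<times> 'a list \<Rightarrow> real)) set" where
  "M_s = {p. p \<in> topspace space_top \<and> sub_consistent (fst p) (snd p)}"

definition marg1 :: "('a \<times> 'a list \<Rightarrow> real) \<Rightarrow> 'a \<Rightarrow> real" where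
  "marg1 \<nu> a = (\<Sum>\<^sub>\<infinity>c. \<nu> (a, c))"

definition marg2 :: "('a::finite \<times> 'a \<Rightarrow> real) \<Rightarrow> 'a \<Rightarrow> real" where
  "marg2 \<omega> b = (\<Sum>a\<in>UNIV. \<omega> (a, b))"

definition kernel_prod :: "('a \<Rightarrow> real) \<Rightarrow> ('a \<Rightarrow> 'a list \<Rightarrow> real) \<Rightarrow> 'a \<times> 'a list \<Rightarrow> real" where
  "kernel_prod m Q p = m (fst p) * Q (fst p) (snd p)"

text \<open>Relative entropy H(nu || rho) of finite measures on a discrete space:
 infinity unless nu << rho, otherwise sum_x [nu ln(nu/rho) - nu + rho] (with 0 ln 0 = 0),
 which is the usual sum_x nu ln(nu/rho) when nu and rho are probability measures.\<close>
definition rel_entropy :: "('b \<Rightarrow> real) \<Rightarrow> ('b \<Rightarrow> real) \<Rightarrow> ereal" where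
  "rel_entropy \<nu> \<rho> =
     (if \<exists>x. 0 < \<nu> x \<and> \<rho> x = 0 then \<infinity>
      else enn2ereal (\<integral>\<^sup>+ x. ennreal
        ((if \<nu> x = 0 then 0 else \<nu> x * ln (\<nu> x / \<rho> x)) - \<nu> x + \<rho> x) \<partial>count_space UNIV))"

definition ln_e :: "real \<Rightarrow> ereal" where
  "ln_e x = (if x \<le> 0 then -\<infinity> else ereal (ln x))"

definition rate_function :: "'x topology \<Rightarrow> ('x \<Rightarrow> ereal) \<Rightarrow> bool" where
  "rate_function T I \<longleftrightarrow> (\<forall>x\<in>topspace T. 0 \<le> I x) \<and>
     (\<forall>c::real. closedin T {x \<in> topspace T. I x \<le> ereal c})"

definition good_rate_function :: "'x topology \<Rightarrow> ('x \<Rightarrow> ereal) \<Rightarrow> bool" where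
  "good_rate_function T I \<longleftrightarrow> rate_function T I \<and>
     (\<forall>c::real. compactin T {x \<in> topspace T. I x \<le> ereal c})"

definition LDP :: "'x topology \<Rightarrow> (nat \<Rightarrow> 'x set \<Rightarrow> real) \<Rightarrow> ('x \<Rightarrow> ereal) \<Rightarrow> bool" where
  "LDP T P I \<longleftrightarrow> rate_function T I \<and>
     (\<forall>F. closedin T F \<longrightarrow>
        limsup (\<lambda>n. ereal (1 / real n) * ln_e (P n F)) \<le> - (INF x\<in>F. I x)) \<and>
     (\<forall>G. openin T G \<longrightarrow>
        - (INF x\<in>G. I x) \<le> liminf (\<lambda>n. ereal (1 / real n) * ln_e (P n G)))"

definition comb :: "real \<Rightarrow> (('a \<times> 'a \<Rightarrow> real) \<times> ('a \<times> 'a list \<Rightarrow> real))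
     \<Rightarrow> (('a \<times> 'a \<Rightarrow> real) \<times> ('a \<times> 'a list \<Rightarrow> real))
     \<Rightarrow> (('a \<times> 'a \<Rightarrow> real) \<times> ('a \<times> 'a list \<Rightarrow> real))" where
  "comb t p q = ((\<lambda>x. t * fst p x + (1 - t) * fst q x), (\<lambda>x. t * snd p x + (1 - t) * snd q x))"

definition convex_rate :: "(('a \<times> 'a \<Rightarrow> real) \<times> ('a \<times> 'a list \<Rightarrow> real)) set
     \<Rightarrow> ((('a \<times> 'a \<Rightarrow> real) \<times> ('a \<times> 'a list \<Rightarrow> real)) \<Rightarrow> ereal) \<Rightarrow> bool" where
  "convex_rate S I \<longleftrightarrow> (\<forall>p\<in>S. \<forall>q\<in>S. \<forall>t. 0 < t \<and> t < 1 \<longrightarrow>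
      I (comb t p q) \<le> ereal t * I p + ereal (1 - t) * I q)"

end

theory Submission
  imports Defs
begin


lemma sum_sum_list_swap:
  "(\<Sum>p\<in>S. sum_list (map (\<lambda>s. f s p) ts)) = sum_list (map (\<lambda>s. \<Sum>p\<in>S. f s p) ts)"
  by (induction ts) (auto simp: sum.distrib)

lemma vc_sub: "s \<in> set ts \<Longrightarrow> vert_count s p \<le> vert_count (TNode a ts) p"
proof -
  assume "s \<in> set ts"
  then have "vert_count s p \<le> sum_list (map (\<lambda>s. vert_count s p) ts)"
    by (simp add: member_le_sum_list)
  then show ?thesis by simp
qed

lemma vc_root: "vert_count (TNode a ts) (a, map troot ts) \<ge> 1"
  by simp

lemma vc_finite: "finite {p. vert_count t p \<noteq> 0}"
proof (induction t)
  case (TNode a ts)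
  have "{p. vert_count (TNode a ts) p \<noteq> 0} \<subseteq> insert (a, map troot ts) (\<Union>s\<in>set ts. {p. vert_count s p \<noteq> 0})"
    by (auto simp: sum_list_eq_0_iff split: if_splits)
  moreover have "finite (insert (a, map troot ts) (\<Union>s\<in>set ts. {p. vert_count s p \<noteq> 0}))"
    using TNode by auto
  ultimately show ?case by (rule finite_subset)
qed

lemma vc_sum: "finite S \<Longrightarrow> {p. vert_count t p \<noteq> 0} \<subseteq> S \<Longrightarrow> sum (vert_count t) S = tsize t"
proof (induction t)
  case (TNode a ts)
  have r0: "vert_count (TNode a ts) (a, map troot ts) \<noteq> 0" using vc_root[of a ts] by (metis not_one_le_zero)
  have r: "(a, map troot ts) \<in> S" using TNode.prems(2) r0 by blast
  have IH: "\<And>s. s \<in> set ts \<Longrightarrow> sum (vert_count s) S = tsize s"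
  proof -
    fix s assume s: "s \<in> set ts"
    have "{p. vert_count s p \<noteq> 0} \<subseteq> S"
    proof
      fix p assume "p \<in> {p. vert_count s p \<noteq> 0}"
      then have "vert_count (TNode a ts) p \<noteq> 0" using vc_sub[OF s, of p a] by (metis (mono_tags) mem_Collect_eq le_zero_eq)
      then show "p \<in> S" using TNode.prems(2) by blast
    qed
    then show "sum (vert_count s) S = tsize s" using TNode.IH s TNode.prems by blast
  qed
  have "sum (vert_count (TNode a ts)) S = (\<Sum>p\<in>S. (if p = (a, map troot ts) then 1 else 0))
        + (\<Sum>p\<in>S. sum_list (map (\<lambda>s. vert_count s p) ts))"
    by (simp add: sum.distrib)
  also have "(\<Sum>p\<in>S. (if p = (a, map troot ts) then 1 else 0)) = (1::nat)"
    using r TNode.prems by (simp add: sum.delta)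
  also have "(\<Sum>p\<in>S. sum_list (map (\<lambda>s. vert_count s p) ts)) = sum_list (map tsize ts)"
    by (simp add: sum_sum_list_swap IH cong: map_cong)
  finally show ?case by simp
qed

lemma ec_sum: "finite S \<Longrightarrow> {c. vert_count t (a, c) \<noteq> 0} \<subseteq> S \<Longrightarrow>
   edge_count t (a, b) = (\<Sum>c\<in>S. count_list c b * vert_count t (a, c))"
proof (induction t)
  case (TNode a' ts)
  have IH: "\<And>s. s \<in> set ts \<Longrightarrow> edge_count s (a, b) = (\<Sum>c\<in>S. count_list c b * vert_count s (a, c))"
  proof -
    fix s assume s: "s \<in> set ts"
    have "{c. vert_count s (a, c) \<noteq> 0} \<subseteq> S"
    proof (rule subsetI)
      fix c assume "c \<in> {c. vert_count s (a, c) \<noteq> 0}"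
      then have "vert_count (TNode a' ts) (a,c) \<noteq> 0" using vc_sub[OF s, of "(a,c)" a'] by (metis (mono_tags) mem_Collect_eq le_zero_eq)
      then show "c \<in> S" using TNode.prems(2) by auto
    qed
    then show "edge_count s (a, b) = (\<Sum>c\<in>S. count_list c b * vert_count s (a, c))"
      using TNode.IH s TNode.prems by blast
  qed
  have "(\<Sum>c\<in>S. count_list c b * vert_count (TNode a' ts) (a, c)) =
     (\<Sum>c\<in>S. (if (a, c) = (a', map troot ts) then count_list c b else 0))
     + (\<Sum>c\<in>S. sum_list (map (\<lambda>s. count_list c b * vert_count s (a, c)) ts))"
    by (simp add: sum.distrib distrib_left sum_list_const_mult[symmetric] o_def) (rule sum.cong; simp)
  also have "(\<Sum>c\<in>S. (if (a, c) = (a', map troot ts) then count_list c b else 0)) =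
     (if a = a' then count_list (map troot ts) b else 0)"
  proof (cases "a = a'")
    case True
    have r0: "vert_count (TNode a' ts) (a', map troot ts) \<noteq> 0" using vc_root[of a' ts] by (metis not_one_le_zero)
    then have "map troot ts \<in> S" using TNode.prems(2) True by blast
    then show ?thesis using True TNode.prems by (simp add: sum.delta)
  qed simp
  also have "(\<Sum>c\<in>S. sum_list (map (\<lambda>s. count_list c b * vert_count s (a, c)) ts))
     = sum_list (map (\<lambda>s. edge_count s (a, b)) ts)"
    by (simp add: sum_sum_list_swap IH cong: map_cong)
  finally have eq: "(\<Sum>c\<in>S. count_list c b * vert_count (TNode a' ts) (a, c)) = (if a = a' then count_list (map troot ts) b else 0) + sum_list (map (\<lambda>s. edge_count s (a, b)) ts)" .
  show ?case using eq[symmetric] by (simp only: edge_count.simps fst_conv snd_conv)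
qed



lemma fin_supp_sum:
  fixes f :: "'b \<Rightarrow> real"
  assumes "finite V" "\<And>x. x \<notin> V \<Longrightarrow> f x = 0"
  shows "f summable_on UNIV \<and> infsum f UNIV = sum f V"
proof
  show "f summable_on UNIV"
    using summable_on_cong_neutral[of V UNIV f f] assms by auto
  have "infsum f V = infsum f UNIV"
    by (rule infsum_cong_neutral) (use assms in auto)
  then show "infsum f UNIV = sum f V" using assms by simp
qed

lemma weak_top_topspace: "topspace (weak_top S) = S"
proof -
  have "S \<in> {{m \<in> S. (\<Sum>\<^sub>\<infinity>x. f x * m x) \<in> U} | f U. bounded (range f) \<and> open U}"
    by (rule CollectI, rule exI[of _ "\<lambda>_. 0"], rule exI[of _ UNIV]) auto
  then show ?thesis unfolding weak_top_def topology_generated_by_topspace by blast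
qed

lemma weak_top_Hausdorff: "Hausdorff_space (weak_top S)"
  unfolding Hausdorff_space_def
proof (intro allI impI)
  fix m1 m2 :: "'a \<Rightarrow> real"
  assume as: "m1 \<in> topspace (weak_top S) \<and> m2 \<in> topspace (weak_top S) \<and> m1 \<noteq> m2"
  then obtain x where x: "m1 x \<noteq> m2 x" by auto
  define f where "f = (\<lambda>y. if y = x then 1 else (0::real))"
  have bf: "bounded (range f)"
    by (rule finite_imp_bounded, rule finite_subset[of _ "{0,1}"]) (auto simp: f_def)
  have ev: "\<And>m. (\<Sum>\<^sub>\<infinity>y. f y * m y) = m x"
  proof -
    fix m :: "'a \<Rightarrow> real"
    have "(\<Sum>\<^sub>\<infinity>y. f y * m y) = sum (\<lambda>y. f y * m y) {x}"
    proof -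
      have z: "\<And>y. y \<notin> {x} \<Longrightarrow> f y * m y = 0" by (simp add: f_def)
      show ?thesis by (rule conjunct2[OF fin_supp_sum[OF _ z]]) simp
    qed
    then show "(\<Sum>\<^sub>\<infinity>y. f y * m y) = m x" by (simp add: f_def)
  qed
  define r where "r = dist (m1 x) (m2 x) / 2"
  have r: "r > 0" using x by (simp add: r_def)
  define A where "A = {m \<in> S. (\<Sum>\<^sub>\<infinity>y. f y * m y) \<in> ball (m1 x) r}"
  define B where "B = {m \<in> S. (\<Sum>\<^sub>\<infinity>y. f y * m y) \<in> ball (m2 x) r}"
  have oA: "openin (weak_top S) A" unfolding weak_top_def A_def
    by (rule topology_generated_by_Basis) (use bf in blast)
  have oB: "openin (weak_top S) B" unfolding weak_top_def B_def
    by (rule topology_generated_by_Basis) (use bf in blast)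
  have "m1 \<in> A" "m2 \<in> B" using as r by (auto simp: A_def B_def ev weak_top_topspace)
  moreover have "disjnt A B"
  proof -
    { fix m assume "m \<in> A" "m \<in> B"
      then have "dist (m1 x) (m x) < r" "dist (m2 x) (m x) < r" by (auto simp: A_def B_def ev)
      then have "dist (m1 x) (m2 x) < 2 * r" using dist_triangle3[of "m1 x" "m2 x" "m x"] dist_commute[of "m x" "m1 x"] dist_commute[of "m x" "m2 x"] by linarith
      then have False by (simp add: r_def) }
    then show ?thesis by (auto simp: disjnt_def)
  qed
  ultimately show "\<exists>U V. openin (weak_top S) U \<and> openin (weak_top S) V \<and> m1 \<in> U \<and> m2 \<in> V \<and> disjnt U V"
    using oA oB by blast
qed

lemma space_top_Hausdorff: "Hausdorff_space space_top"
  unfolding space_top_def Hausdorff_space_prod_topology by (simp add: weak_top_Hausdorff)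

lemma space_top_topspace: "topspace space_top = fin_meas \<times> prob_meas_fm"
  unfolding space_top_def by (simp add: weak_top_topspace)

lemma tsize_pos: "tsize t \<ge> 1"
  by (cases t) auto

lemma emp_Ms: "emp_pair (t::'a::finite ttree) \<in> M_s"
proof -
  define n where "n = real (tsize t)"
  have n: "n > 0" using tsize_pos[of t] by (simp add: n_def)
  define V where "V = {p. vert_count t p \<noteq> 0}"
  have V: "finite V" using vc_finite by (simp add: V_def)
  define \<nu> where "\<nu> = (\<lambda>p. real (vert_count t p) / real (tsize t))"
  define \<omega> where "\<omega> = (\<lambda>p. real (edge_count t p) / real (tsize t))"
  have ep: "emp_pair t = (\<omega>, \<nu>)" by (simp add: emp_pair_def \<omega>_def \<nu>_def)
  have om: "\<omega> \<in> fin_meas" unfolding fin_meas_def \<omega>_def by (auto intro: summable_on_finite)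
  have nu1: "\<nu> summable_on UNIV \<and> infsum \<nu> UNIV = sum \<nu> V"
    by (rule fin_supp_sum[OF V]) (auto simp: V_def \<nu>_def)
  have "sum \<nu> V = real (sum (vert_count t) V) / n"
    by (simp add: \<nu>_def n_def sum_divide_distrib)
  also have "\<dots> = 1" using vc_sum[OF V, of t] n by (simp add: V_def n_def)
  finally have nu2: "infsum \<nu> UNIV = 1" using nu1 by simp
  have nu3: "(\<lambda>p. real (length (snd p)) * \<nu> p) summable_on UNIV"
  proof -
    have z3: "\<And>p. p \<notin> V \<Longrightarrow> real (length (snd p)) * \<nu> p = 0" by (simp add: V_def \<nu>_def)
    show ?thesis by (rule conjunct1[OF fin_supp_sum[OF V z3]])
  qed
  have nn: "\<forall>x. 0 \<le> \<nu> x" by (simp add: \<nu>_def)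
  have nu: "\<nu> \<in> prob_meas_fm"
    unfolding prob_meas_fm_def prob_meas_def fin_meas_def using nu1 nu2 nu3 nn by blast
  have sc: "sub_consistent \<omega> \<nu>"
    unfolding sub_consistent_def
  proof (intro allI)
    fix a b
    define C where "C = snd ` V"
    have C: "finite C" using V by (simp add: C_def)
    have sub: "{c. vert_count t (a, c) \<noteq> 0} \<subseteq> C"
    proof
      fix c assume "c \<in> {c. vert_count t (a, c) \<noteq> 0}"
      then have "(a, c) \<in> V" by (simp add: V_def)
      then show "c \<in> C" unfolding C_def by (rule image_eqI[rotated]) simp
    qed
    have "(\<Sum>\<^sub>\<infinity>c. real (count_list c b) * \<nu> (a, c)) = (\<Sum>c\<in>C. real (count_list c b) * \<nu> (a, c))"
    proof -
      have z: "\<And>c. c \<notin> C \<Longrightarrow> real (count_list c b) * \<nu> (a, c) = 0" using sub by (auto simp: \<nu>_def)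
      show ?thesis by (rule conjunct2[OF fin_supp_sum[OF C z]])
    qed
    also have "\<dots> = real (\<Sum>c\<in>C. count_list c b * vert_count t (a, c)) / real (tsize t)"
      by (simp add: \<nu>_def sum_divide_distrib)
    also have "\<dots> = \<omega> (a, b)" using ec_sum[OF C sub, of b] by (simp add: \<omega>_def)
    finally show "\<omega> (a, b) \<ge> (\<Sum>\<^sub>\<infinity>c. real (count_list c b) * \<nu> (a, c))" by simp
  qed
  show ?thesis unfolding M_s_def ep using om nu sc by (simp add: space_top_topspace)
qed



lemma generic_LDP:
  fixes X :: "'x topology" and S :: "'x set" and I J :: "'x \<Rightarrow> ereal"
  assumes S: "S \<subseteq> topspace X"
    and J: "\<And>x. x \<in> topspace X \<Longrightarrow> J x = (if x \<in> S then I x else \<infinity>)"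
    and LDPI: "LDP (subtopology X S) P I" and good: "good_rate_function (subtopology X S) I"
    and H: "Hausdorff_space X" and PS: "\<And>n A. P n A = P n (A \<inter> S)"
  shows "LDP X P J \<and> good_rate_function X J"
proof -
  have lev: "\<And>c. {x \<in> topspace X. J x \<le> ereal c} = {x \<in> topspace (subtopology X S). I x \<le> ereal c}"
    using S J by (auto split: if_splits)
  have comp: "\<And>c. compactin X {x \<in> topspace X. J x \<le> ereal c}"
    using good unfolding good_rate_function_def lev compactin_subtopology by blast
  have clo: "\<And>c. closedin X {x \<in> topspace X. J x \<le> ereal c}"
    using compactin_imp_closedin[OF H comp] .
  have nn: "\<forall>x\<in>topspace X. 0 \<le> J x"
    using good J S unfolding good_rate_function_def rate_function_def by auto
  have rate: "rate_function X J" unfolding rate_function_def using nn clo by blast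
  have up: "\<And>F. closedin X F \<Longrightarrow>
        limsup (\<lambda>n. ereal (1 / real n) * ln_e (P n F)) \<le> - (INF x\<in>F. J x)"
  proof -
    fix F assume F: "closedin X F"
    have FT: "F \<subseteq> topspace X" using F closedin_subset by blast
    have F': "closedin (subtopology X S) (F \<inter> S)"
      unfolding closedin_subtopology using F by blast
    have "limsup (\<lambda>n. ereal (1 / real n) * ln_e (P n F)) = limsup (\<lambda>n. ereal (1 / real n) * ln_e (P n (F \<inter> S)))"
      using PS by simp
    also have "\<dots> \<le> - (INF x\<in>F \<inter> S. I x)" using LDPI F' unfolding LDP_def by blast
    also have "\<dots> \<le> - (INF x\<in>F. J x)"
    proof -
      have "(INF x\<in>F. J x) \<le> (INF x\<in>F \<inter> S. I x)"
        by (rule INF_mono) (use J FT in force)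
      then show ?thesis by simp
    qed
    finally show "limsup (\<lambda>n. ereal (1 / real n) * ln_e (P n F)) \<le> - (INF x\<in>F. J x)" .
  qed
  have low: "\<And>G. openin X G \<Longrightarrow>
        - (INF x\<in>G. J x) \<le> liminf (\<lambda>n. ereal (1 / real n) * ln_e (P n G))"
  proof -
    fix G assume G: "openin X G"
    have GT: "G \<subseteq> topspace X" using G openin_subset by blast
    have G': "openin (subtopology X S) (G \<inter> S)"
      unfolding openin_subtopology using G by blast
    have "(INF x\<in>G \<inter> S. I x) \<le> (INF x\<in>G. J x)"
    proof (rule INF_greatest)
      fix x assume x: "x \<in> G"
      show "(INF x\<in>G \<inter> S. I x) \<le> J x"
      proof (cases "x \<in> S")
        case True
        then have "J x = I x" using J x GT by auto
        moreover have "(INF x\<in>G \<inter> S. I x) \<le> I x" using True x by (intro INF_lower) auto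
        ultimately show ?thesis by simp
      next
        case False then show ?thesis using J x GT by auto
      qed
    qed
    then have "- (INF x\<in>G. J x) \<le> - (INF x\<in>G \<inter> S. I x)" by simp
    also have "\<dots> \<le> liminf (\<lambda>n. ereal (1 / real n) * ln_e (P n (G \<inter> S)))"
      using LDPI G' unfolding LDP_def by blast
    also have "\<dots> = liminf (\<lambda>n. ereal (1 / real n) * ln_e (P n G))"
      using PS by simp
    finally show "- (INF x\<in>G. J x) \<le> liminf (\<lambda>n. ereal (1 / real n) * ln_e (P n G))" .
  qed
  show ?thesis unfolding LDP_def good_rate_function_def using rate comp up low by blast
qed

lemma count_summable:
  assumes "\<nu> \<in> prob_meas_fm"
  shows "(\<lambda>c. real (count_list c b) * \<nu> (a, c)) summable_on UNIV"
proof -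
  have nn: "\<And>p. 0 \<le> \<nu> p" using assms by (auto simp: prob_meas_fm_def prob_meas_def fin_meas_def)
  have g: "(\<lambda>p. real (length (snd p)) * \<nu> p) summable_on UNIV"
    using assms by (auto simp: prob_meas_fm_def)
  then have "(\<lambda>p. real (length (snd p)) * \<nu> p) summable_on (range (Pair a))"
    by (rule summable_on_subset) auto
  then have "((\<lambda>p. real (length (snd p)) * \<nu> p) \<circ> Pair a) summable_on UNIV"
    by (subst summable_on_reindex[symmetric]) (auto simp: inj_on_def)
  then have g2: "(\<lambda>c. real (length c) * \<nu> (a, c)) summable_on UNIV" by (simp add: o_def)
  show ?thesis
    by (rule summable_on_comparison_test[OF g2])
       (auto intro!: mult_right_mono simp: nn count_le_length)
qed

lemma comb_Ms:
  assumes p: "p \<in> M_s" and q: "q \<in> M_s" and t: "0 < t" "t < 1"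
  shows "comb t p q \<in> M_s"
proof -
  obtain \<omega>1 \<nu>1 where p1: "p = (\<omega>1, \<nu>1)" by fastforce
  obtain \<omega>2 \<nu>2 where q1: "q = (\<omega>2, \<nu>2)" by fastforce
  have o1: "\<omega>1 \<in> fin_meas" and n1: "\<nu>1 \<in> prob_meas_fm" and s1: "sub_consistent \<omega>1 \<nu>1"
    using p by (auto simp: M_s_def p1 space_top_topspace)
  have o2: "\<omega>2 \<in> fin_meas" and n2: "\<nu>2 \<in> prob_meas_fm" and s2: "sub_consistent \<omega>2 \<nu>2"
    using q by (auto simp: M_s_def q1 space_top_topspace)
  define \<omega> where "\<omega> = (\<lambda>x. t * \<omega>1 x + (1 - t) * \<omega>2 x)"
  define \<nu> where "\<nu> = (\<lambda>x. t * \<nu>1 x + (1 - t) * \<nu>2 x)"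
  have c: "comb t p q = (\<omega>, \<nu>)" by (simp add: comb_def p1 q1 \<omega>_def \<nu>_def)
  have om: "\<omega> \<in> fin_meas"
    using o1 o2 t unfolding fin_meas_def \<omega>_def
    by (auto intro!: summable_on_add summable_on_cmult_right add_nonneg_nonneg mult_nonneg_nonneg)
  have n1s: "\<nu>1 summable_on UNIV" "infsum \<nu>1 UNIV = 1" "\<forall>x. 0 \<le> \<nu>1 x"
    "(\<lambda>p. real (length (snd p)) * \<nu>1 p) summable_on UNIV"
    using n1 by (auto simp: prob_meas_fm_def prob_meas_def fin_meas_def)
  have n2s: "\<nu>2 summable_on UNIV" "infsum \<nu>2 UNIV = 1" "\<forall>x. 0 \<le> \<nu>2 x"
    "(\<lambda>p. real (length (snd p)) * \<nu>2 p) summable_on UNIV"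
    using n2 by (auto simp: prob_meas_fm_def prob_meas_def fin_meas_def)
  have nsum: "\<nu> summable_on UNIV" unfolding \<nu>_def
    using n1s n2s by (auto intro!: summable_on_add summable_on_cmult_right)
  have ninf: "infsum \<nu> UNIV = 1" unfolding \<nu>_def
    using n1s n2s by (simp add: infsum_add summable_on_cmult_right infsum_cmult_right)
  have nlen: "(\<lambda>p. real (length (snd p)) * \<nu> p) summable_on UNIV"
  proof -
    have "(\<lambda>p. t * (real (length (snd p)) * \<nu>1 p) + (1 - t) * (real (length (snd p)) * \<nu>2 p)) summable_on UNIV"
      using n1s n2s by (auto intro!: summable_on_add summable_on_cmult_right)
    then show ?thesis by (simp add: \<nu>_def algebra_simps)
  qed
  have nu: "\<nu> \<in> prob_meas_fm"
    unfolding prob_meas_fm_def prob_meas_def fin_meas_def using nsum ninf nlen n1s n2s t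
    by (auto simp: \<nu>_def intro!: add_nonneg_nonneg mult_nonneg_nonneg)
  have sc: "sub_consistent \<omega> \<nu>"
    unfolding sub_consistent_def
  proof (intro allI)
    fix a b
    have A: "(\<lambda>c. real (count_list c b) * \<nu>1 (a, c)) summable_on UNIV" using count_summable[OF n1] .
    have B: "(\<lambda>c. real (count_list c b) * \<nu>2 (a, c)) summable_on UNIV" using count_summable[OF n2] .
    have "(\<Sum>\<^sub>\<infinity>c. real (count_list c b) * \<nu> (a, c)) =
       (\<Sum>\<^sub>\<infinity>c. t * (real (count_list c b) * \<nu>1 (a, c)) + (1 - t) * (real (count_list c b) * \<nu>2 (a, c)))"
      by (simp add: \<nu>_def algebra_simps)
    also have "\<dots> = t * (\<Sum>\<^sub>\<infinity>c. real (count_list c b) * \<nu>1 (a, c)) + (1 - t) * (\<Sum>\<^sub>\<infinity>c. real (count_list c b) * \<nu>2 (a, c))"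
      using A B by (simp add: infsum_add summable_on_cmult_right infsum_cmult_right)
    also have "\<dots> \<le> t * \<omega>1 (a, b) + (1 - t) * \<omega>2 (a, b)"
      using s1 s2 t unfolding sub_consistent_def
      by (intro add_mono mult_left_mono) auto
    finally show "(\<Sum>\<^sub>\<infinity>c. real (count_list c b) * \<nu> (a, c)) \<le> \<omega> (a, b)" by (simp add: \<omega>_def)
  qed
  show ?thesis unfolding c M_s_def using om nu sc by (simp add: space_top_topspace)
qed

theorem lemma3p2:
  fixes \<mu> :: "'a::finite \<Rightarrow> real" and Q :: "'a \<Rightarrow> 'a list \<Rightarrow> real"
  assumes mu_prob: "(\<forall>a. 0 \<le> \<mu> a) \<and> (\<Sum>a\<in>UNIV. \<mu> a) = 1"
    and Q_kernel: "\<And>a. (\<forall>c. 0 \<le> Q a c) \<and> Q a summable_on UNIV \<and> (\<Sum>\<^sub>\<infinity>c. Q a c) = 1"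
    and hyp_LDP: "LDP (subtopology space_top M_s) (cond_prob \<mu> Q)
        (\<lambda>(\<omega>, \<nu>). if marg2 \<omega> = marg1 \<nu> then rel_entropy \<nu> (kernel_prod (marg1 \<nu>) Q) else \<infinity>)"
    and hyp_good: "good_rate_function (subtopology space_top M_s)
        (\<lambda>(\<omega>, \<nu>). if marg2 \<omega> = marg1 \<nu> then rel_entropy \<nu> (kernel_prod (marg1 \<nu>) Q) else \<infinity>)"
    and hyp_convex: "convex_rate M_s
        (\<lambda>(\<omega>, \<nu>). if marg2 \<omega> = marg1 \<nu> then rel_entropy \<nu> (kernel_prod (marg1 \<nu>) Q) else \<infinity>)"
  shows "LDP space_top (cond_prob \<mu> Q)
           (\<lambda>(\<omega>, \<nu>). if sub_consistent \<omega> \<nu> \<and> marg2 \<omega> = marg1 \<nu>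
              then rel_entropy \<nu> (kernel_prod (marg1 \<nu>) Q) else \<infinity>)
      \<and> good_rate_function space_top
           (\<lambda>(\<omega>, \<nu>). if sub_consistent \<omega> \<nu> \<and> marg2 \<omega> = marg1 \<nu>
              then rel_entropy \<nu> (kernel_prod (marg1 \<nu>) Q) else \<infinity>)
      \<and> convex_rate (topspace space_top)
           (\<lambda>(\<omega>, \<nu>). if sub_consistent \<omega> \<nu> \<and> marg2 \<omega> = marg1 \<nu>
              then rel_entropy \<nu> (kernel_prod (marg1 \<nu>) Q) else \<infinity>)"
proof -
  define I where "I = (\<lambda>(\<omega>::'a \<times> 'a \<Rightarrow> real, \<nu>::'a \<times> 'a list \<Rightarrow> real).
      if marg2 \<omega> = marg1 \<nu> then rel_entropy \<nu> (kernel_prod (marg1 \<nu>) Q) else \<infinity>)"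
  define J where "J = (\<lambda>(\<omega>::'a \<times> 'a \<Rightarrow> real, \<nu>::'a \<times> 'a list \<Rightarrow> real).
      if sub_consistent \<omega> \<nu> \<and> marg2 \<omega> = marg1 \<nu>
              then rel_entropy \<nu> (kernel_prod (marg1 \<nu>) Q) else \<infinity>)"
  have hL: "LDP (subtopology space_top M_s) (cond_prob \<mu> Q) I" using hyp_LDP unfolding I_def .
  have hG: "good_rate_function (subtopology space_top M_s) I" using hyp_good unfolding I_def .
  have hC: "convex_rate M_s I" using hyp_convex unfolding I_def .
  have Ms_sub: "M_s \<subseteq> topspace space_top" by (auto simp: M_s_def)
  have JI: "\<And>x. x \<in> topspace space_top \<Longrightarrow> J x = (if x \<in> M_s then I x else \<infinity>)"
    by (auto simp: J_def I_def M_s_def split: prod.splits)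
  have PS: "\<And>n A. cond_prob \<mu> Q n A = cond_prob \<mu> Q n (A \<inter> M_s)"
    by (simp add: cond_prob_def emp_Ms)
  have LG: "LDP space_top (cond_prob \<mu> Q) J \<and> good_rate_function space_top J"
    by (rule generic_LDP[OF Ms_sub JI hL hG space_top_Hausdorff PS])
  have re_nn: "\<And>\<nu> \<rho>. 0 \<le> rel_entropy \<nu> \<rho>"
    by (simp add: rel_entropy_def)
  have Jnn: "\<And>x. 0 \<le> J x" by (auto simp: J_def re_nn split: prod.splits)
  have conv: "convex_rate (topspace space_top) J"
    unfolding convex_rate_def
  proof (intro ballI allI impI)
    fix p q :: "('a \<times> 'a \<Rightarrow> real) \<times> ('a \<times> 'a list \<Rightarrow> real)" and t :: real
    assume p: "p \<in> topspace space_top" and q: "q \<in> topspace space_top" and t: "0 < t \<and> t < 1"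
    show "J (comb t p q) \<le> ereal t * J p + ereal (1 - t) * J q"
    proof (cases "p \<in> M_s \<and> q \<in> M_s")
      case True
      then have cm: "comb t p q \<in> M_s" using comb_Ms t by blast
      have "comb t p q \<in> topspace space_top" using cm Ms_sub by blast
      then have "J (comb t p q) = I (comb t p q)" using JI[of "comb t p q"] cm by simp
      also have "\<dots> \<le> ereal t * I p + ereal (1 - t) * I q" using hC True t unfolding convex_rate_def by blast
      also have "\<dots> = ereal t * J p + ereal (1 - t) * J q" using JI[OF p] JI[OF q] True by simp
      finally show ?thesis .
    next
      case False
      have tp: "ereal t * \<infinity> = \<infinity>" "ereal (1 - t) * \<infinity> = \<infinity>" using t by auto
      have a: "0 \<le> ereal t * J p" "0 \<le> ereal (1 - t) * J q" using t Jnn by auto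
      have inf: "ereal t * J p + ereal (1 - t) * J q = \<infinity>"
      proof (cases "p \<in> M_s")
        case True
        then have "q \<notin> M_s" using False by blast
        then have "J q = \<infinity>" using JI[OF q] by simp
        then show ?thesis using tp a by simp
      next
        case False
        then have "J p = \<infinity>" using JI[OF p] by simp
        then show ?thesis using tp a by simp
      qed
      show ?thesis by (subst inf) simp
    qed
  qed
  show ?thesis using LG conv unfolding J_def by blast
qed


end
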